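(* Let $F_0,\dots,F_m\in\mathbb C[t_0,t_1,t_2]$ be homogeneous polynomials defining projective plane curves $\mathcal C_0,\dots,\mathcal C_m\subset\mathbb P^2$, and suppose: (i) $F_1,\dots,F_m$ have positive degree in $t_0$; (ii) $F_1,\dots,F_m$ have the same total degree; (iii) $\gcd(F_1,\dots,F_m)=1$. Let $\bar c=(c_1,\dots,c_m)$ be new variables, $F(\bar c,\bar t_h)=c_1F_1+\dots+c_mF_m$, and $R(\bar c,t_1,t_2)=\operatorname{Res}_{t_0}(F_0,F)$. Let $\operatorname{lc}_{t_0}(F_0)\in\mathbb C[t_1,t_2]$ and $\operatorname{lc}_{t_0}(F)\in\mathbb C[\bar c,t_1,t_2]$ be the leading coefficients with respect to $t_0$. If $\bar t^o=(t_1^o,t_2^o)\in\mathbb C^2\setminus\{\bar0\}$ satisfies $\operatorname{Con}_{\bar c}(R)(\bar t^o)=0$ and $\operatorname{lc}_{t_0}(F_0)(\bar t^o)\cdot\operatorname{lc}_{t_0}(F)(\bar c,\bar t^o)\neq0$ (the latter as a polynomial in $\bar c$), then there exists $t_0^o\in\mathbb C$ such that $(t_0^o:t_1^o:t_2^o)\in\bigcap_{i=0}^m\mathcal C_i$.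
   Context: $\operatorname{Res}_{t_0}$ is the univariate resultant with respect to $t_0$; $\operatorname{Con}_{\bar c}(R)\in\mathbb C[t_1,t_2]$ is the content of $R$ viewed as a polynomial in $\bar c$ with coefficients in $\mathbb C[t_1,t_2]$ (gcd of its coefficients). $\bar t_h=(t_0,t_1,t_2)$. *)

theory Defs
  imports "Subresultants.Resultant_Prelim" "HOL-Library.Poly_Mapping"
    "HOL-Computational_Algebra.Polynomial_Factorial" "HOL-Computational_Algebra.Field_as_Ring"
begin

text \<open>A polynomial in C[t1,t2] is represented as complex poly poly: the outer variable is t2,
  the inner variable is t1.
  A polynomial in C[t0,t1,t2] is represented as complex poly poly poly: the outer variable is t0,
  with coefficients in C[t1,t2].  Thus lead_coeff and resultant of the outer
  polynomial are the leading coefficient and the resultant with respect to t0.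
  Polynomials in the m new variables c_1,...,c_m with coefficients in a ring are
  represented as (nat =>0 nat) =>0 coefficient (exponent vector to coefficient).\<close>

type_synonym poly2 = "complex poly poly"
type_synonym poly3 = "complex poly poly poly"
type_synonym 'a cpoly = "(nat \<Rightarrow>\<^sub>0 nat) \<Rightarrow>\<^sub>0 'a"

definition eval2 :: "poly2 \<Rightarrow> complex \<Rightarrow> complex \<Rightarrow> complex" where
  "eval2 q a1 a2 = poly (map_poly (\<lambda>p. poly p a1) q) a2"

definition eval3 :: "poly3 \<Rightarrow> complex \<Rightarrow> complex \<Rightarrow> complex \<Rightarrow> complex" where
  "eval3 F a0 a1 a2 = poly (map_poly (\<lambda>q. eval2 q a1 a2) F) a0"

text \<open>Homogeneity of total degree d: every monomial t0^i t1^k t2^j with nonzero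
  coefficient has i + j + k = d.\<close>
definition homogeneous3 :: "nat \<Rightarrow> poly3 \<Rightarrow> bool" where
  "homogeneous3 d F \<longleftrightarrow>
     (\<forall>i j k. coeff (coeff (coeff F i) j) k \<noteq> 0 \<longrightarrow> i + j + k = d)"

definition defines_curve :: "poly3 \<Rightarrow> bool" where
  "defines_curve F \<longleftrightarrow> F \<noteq> 0 \<and> (\<exists>d>0. homogeneous3 d F)"

definition cconst :: "'a::zero \<Rightarrow> 'a cpoly" where
  "cconst a = Poly_Mapping.single 0 a"

definition cvar :: "nat \<Rightarrow> 'a::{zero,one} cpoly" where
  "cvar i = Poly_Mapping.single (Poly_Mapping.single i 1) 1"

definition content_c :: "poly2 cpoly \<Rightarrow> poly2" where
  "content_c R = Gcd (range (Poly_Mapping.lookup R))"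

definition generic_comb :: "nat \<Rightarrow> (nat \<Rightarrow> poly3) \<Rightarrow> poly2 cpoly poly" where
  "generic_comb m F = (\<Sum>i\<in>{1..m}. smult (cvar i) (map_poly cconst (F i)))"

definition lift_c :: "poly3 \<Rightarrow> poly2 cpoly poly" where
  "lift_c F0 = map_poly cconst F0"

end

theory Submission imports Defs "HOL-Computational_Algebra.Fundamental_Theorem_Algebra" "Subresultants.Subresultant_Gcd"
begin

definition wt :: "(nat \<Rightarrow>\<^sub>0 nat) \<Rightarrow> nat" where
  "wt \<mu> = (\<Sum>i\<in>Poly_Mapping.keys \<mu>. i * Poly_Mapping.lookup \<mu> i)"

lemma wt_sub: "finite S \<Longrightarrow> Poly_Mapping.keys \<mu> \<subseteq> S \<Longrightarrow> wt \<mu> = (\<Sum>i\<in>S. i * Poly_Mapping.lookup \<mu> i)"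
  unfolding wt_def by (rule sum.mono_neutral_left) (auto simp: in_keys_iff)

lemma wt_add: "wt (a + b) = wt a + wt b"
proof -
  let ?S = "Poly_Mapping.keys a \<union> Poly_Mapping.keys b"
  have "wt (a+b) = (\<Sum>i\<in>?S. i * Poly_Mapping.lookup (a+b) i)"
    by (rule wt_sub) (auto simp: keys_add)
  also have "\<dots> = (\<Sum>i\<in>?S. i * Poly_Mapping.lookup a i) + (\<Sum>i\<in>?S. i * Poly_Mapping.lookup b i)"
    by (simp add: lookup_add distrib_left sum.distrib)
  also have "\<dots> = wt a + wt b" using wt_sub[of ?S a] wt_sub[of ?S b] by simp
  finally show ?thesis .
qed

lemma wt_single: "wt (Poly_Mapping.single i 1) = i"
  unfolding wt_def by simp

definition Ev :: "('a::comm_ring_1 \<Rightarrow> complex) \<Rightarrow> complex \<Rightarrow> ((nat \<Rightarrow>\<^sub>0 nat) \<Rightarrow>\<^sub>0 'a) \<Rightarrow> complex" where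
  "Ev h x R = (\<Sum>\<mu>\<in>Poly_Mapping.keys R. h (Poly_Mapping.lookup R \<mu>) * x ^ wt \<mu>)"

context
  fixes h :: "'a::comm_ring_1 \<Rightarrow> complex"
  assumes h: "comm_ring_hom h"
begin
interpretation h: comm_ring_hom h by (rule h)

lemma Ev_sub: "finite S \<Longrightarrow> Poly_Mapping.keys R \<subseteq> S \<Longrightarrow> Ev h x R = (\<Sum>\<mu>\<in>S. h (Poly_Mapping.lookup R \<mu>) * x ^ wt \<mu>)"
  unfolding Ev_def by (rule sum.mono_neutral_left) (auto simp: in_keys_iff)

lemma Ev_add: "Ev h x (a + b) = Ev h x a + Ev h x b"
proof -
  let ?S = "Poly_Mapping.keys a \<union> Poly_Mapping.keys b"
  have "Ev h x (a+b) = (\<Sum>i\<in>?S. h (Poly_Mapping.lookup (a+b) i) * x ^ wt i)"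
    by (rule Ev_sub) (auto simp: keys_add)
  also have "\<dots> = (\<Sum>i\<in>?S. h (Poly_Mapping.lookup a i) * x ^ wt i) + (\<Sum>i\<in>?S. h (Poly_Mapping.lookup b i) * x ^ wt i)"
    by (simp add: lookup_add algebra_simps sum.distrib h.hom_add)
  also have "\<dots> = Ev h x a + Ev h x b" using Ev_sub[of ?S a] Ev_sub[of ?S b] by simp
  finally show ?thesis .
qed

lemma Ev_single: "Ev h x (Poly_Mapping.single a c) = h c * x ^ wt a"
  by (subst Ev_sub[of "{a}"]) (auto simp: lookup_single)

lemma Ev_zero: "Ev h x 0 = 0" by (simp add: Ev_def)

lemma update_eq: "a \<notin> Poly_Mapping.keys f \<Longrightarrow> Poly_Mapping.update a b f = f + Poly_Mapping.single a b"
  by (rule poly_mapping_eqI) (auto simp: lookup_update lookup_add lookup_single in_keys_iff when_def)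

lemma Ev_mult_single: "Ev h x (Poly_Mapping.single a c * q) = Ev h x (Poly_Mapping.single a c) * Ev h x q"
proof (induction q rule: update_induct)
  case const thus ?case by (simp add: Ev_zero)
next
  case (update g k v)
  have u: "Poly_Mapping.update k v g = g + Poly_Mapping.single k v" using update_eq[OF update(1)] .
  have "Ev h x (Poly_Mapping.single a c * Poly_Mapping.update k v g) =
     Ev h x (Poly_Mapping.single a c * g) + Ev h x (Poly_Mapping.single (a + k) (c * v))"
    unfolding u distrib_left Ev_add mult_single ..
  also have "Ev h x (Poly_Mapping.single (a + k) (c * v)) = Ev h x (Poly_Mapping.single a c) * Ev h x (Poly_Mapping.single k v)"
    by (simp only: Ev_single wt_add h.hom_mult power_add mult_ac)
  finally show ?case using update(3) unfolding u Ev_add by (simp add: distrib_left)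
qed

lemma Ev_mult: "Ev h x (p * q) = Ev h x p * Ev h x q"
proof (induction p rule: update_induct)
  case const thus ?case by (simp add: Ev_zero)
next
  case (update g k v)
  show ?case using update
    by (simp add: update_eq distrib_right Ev_add Ev_mult_single)
qed

lemma Ev_hom: "comm_ring_hom (Ev h x)"
  apply unfold_locales
     apply (simp add: Ev_zero)
    apply (simp add: Ev_add)
   apply (metis Ev_single h.hom_one mult_1 power_0 single_one wt_def keys_zero sum.empty)
  apply (simp add: Ev_mult)
  done
end


lemma ev_hom: "comm_ring_hom (\<lambda>q. eval2 q a1 a2)"
proof -
  interpret p1: comm_ring_hom "\<lambda>p::complex poly. poly p a1" by unfold_locales auto
  interpret m: map_poly_comm_ring_hom "\<lambda>p::complex poly. poly p a1" ..
  show ?thesis by unfold_locales (simp_all add: eval2_def m.hom_add m.hom_mult)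
qed

lemma monom_sum_nz:
  fixes b :: "nat \<Rightarrow> complex"
  assumes "j \<in> {1..m}" "b j \<noteq> 0"
  shows "(\<Sum>i\<in>{1..m}. monom (b i) i) \<noteq> 0"
proof -
  have "coeff (\<Sum>i\<in>{1..m}. monom (b i) i) j = (\<Sum>i\<in>{1..m}. if i = j then b i else 0)"
    by (simp add: coeff_sum coeff_monom)
  also have "\<dots> = b j" using assms(1) by (simp add: sum.delta')
  finally show ?thesis using assms(2) by auto
qed

lemma poly_monom_sum: "poly (\<Sum>i\<in>A. monom (b i) i) x = (\<Sum>i\<in>A. b i * x ^ i)" for b :: "nat \<Rightarrow> complex"
  by (simp add: poly_sum Polynomial.poly_monom)

theorem mainTheorem12:
  fixes m :: nat and F :: "nat \<Rightarrow> poly3" and t1 t2 :: complex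
  assumes curves: "\<forall>i\<in>{0..m}. defines_curve (F i)"
    and pos_deg: "\<forall>i\<in>{1..m}. degree (F i) > 0"
    and same_deg: "\<exists>d. \<forall>i\<in>{1..m}. homogeneous3 d (F i)"
    and coprime: "Gcd (F ` {1..m}) = 1"
    and nonzero: "(t1, t2) \<noteq> (0, 0)"
    and con_zero: "eval2 (content_c (resultant (lift_c (F 0)) (generic_comb m F))) t1 t2 = 0"
    and lc0: "eval2 (lead_coeff (F 0)) t1 t2 \<noteq> 0"
    and lcF: "\<exists>\<mu>. eval2 (Poly_Mapping.lookup (lead_coeff (generic_comb m F)) \<mu>) t1 t2 \<noteq> 0"
  shows "\<exists>t0. \<forall>i\<in>{0..m}. eval3 (F i) t0 t1 t2 = 0"
proof -
  define ev where "ev = (\<lambda>q. eval2 q t1 t2)"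
  interpret ev: comm_ring_hom ev unfolding ev_def by (rule ev_hom)
  define G where "G = generic_comb m F"
  define R where "R = resultant (lift_c (F 0)) G"
  define f where "f i = map_poly ev (F i)" for i
  define n where "n = degree G"
  define a where "a i = ev (coeff (F i) n)" for i
  have cc0: "cconst 0 = 0" by (simp add: cconst_def)
  have lcG: "lead_coeff G = (\<Sum>i\<in>{1..m}. cvar i * cconst (coeff (F i) n))"
    unfolding n_def[symmetric] unfolding G_def generic_comb_def
    by (simp add: coeff_sum coeff_map_poly cc0)
  have lk: "Poly_Mapping.lookup (cvar i * cconst c) \<mu> = (c when Poly_Mapping.single i 1 = \<mu>)" for i and c :: poly2 and \<mu>
    by (simp add: cvar_def cconst_def mult_single lookup_single when_def)
  from lcF obtain \<mu> where mu: "ev (Poly_Mapping.lookup (lead_coeff G) \<mu>) \<noteq> 0"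
    unfolding ev_def G_def by auto
  have "ev (Poly_Mapping.lookup (lead_coeff G) \<mu>) = (\<Sum>i\<in>{1..m}. ev (coeff (F i) n when Poly_Mapping.single i 1 = \<mu>))"
    unfolding lcG lookup_sum lk ev.hom_sum ..
  with mu obtain i0 where i0: "i0 \<in> {1..m}" "ev (coeff (F i0) n when Poly_Mapping.single i0 1 = \<mu>) \<noteq> 0"
    by (metis (no_types, lifting) sum.neutral)
  have ai0: "a i0 \<noteq> 0" using i0(2) unfolding a_def by (cases "Poly_Mapping.single i0 1 = \<mu>") auto
  define Q where "Q = (\<Sum>i\<in>{1..m}. monom (a i) i)"
  have Q0: "Q \<noteq> 0" unfolding Q_def by (rule monom_sum_nz[of i0 m a, OF i0(1) ai0])
  have f0lc: "coeff (f 0) (degree (F 0)) \<noteq> 0"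
  proof -
    have "ev (lead_coeff (F 0)) \<noteq> 0" using lc0 unfolding ev_def .
    thus ?thesis unfolding f_def by (simp add: coeff_map_poly)
  qed
  hence f00: "f 0 \<noteq> 0" by auto
  define B where "B = {\<alpha>. poly (f 0) \<alpha> = 0 \<and> (\<exists>i\<in>{1..m}. poly (f i) \<alpha> \<noteq> 0)}"
  define P where "P \<alpha> = (\<Sum>i\<in>{1..m}. monom (poly (f i) \<alpha>) i)" for \<alpha>
  have finB: "finite B" unfolding B_def
    by (rule finite_subset[OF _ poly_roots_finite[OF f00]]) auto
  have P0: "\<alpha> \<in> B \<Longrightarrow> P \<alpha> \<noteq> 0" for \<alpha>
  proof -
    assume "\<alpha> \<in> B"
    then obtain j where "j \<in> {1..m}" "poly (f j) \<alpha> \<noteq> 0" unfolding B_def by auto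
    thus ?thesis unfolding P_def by (rule monom_sum_nz[of j m "\<lambda>i. poly (f i) \<alpha>"])
  qed
  define X where "X = {x. poly Q x = 0} \<union> (\<Union>\<alpha>\<in>B. {x. poly (P \<alpha>) x = 0})"
  have "finite X" unfolding X_def using finB P0 Q0 by (auto intro!: poly_roots_finite)
  then obtain x where x: "x \<notin> X" using ex_new_if_finite[OF infinite_UNIV_char_0] by blast
  define E where "E = Ev ev x"
  interpret E: comm_ring_hom E unfolding E_def by (rule Ev_hom) (rule ev.comm_ring_hom_axioms)
  have wt0: "wt 0 = 0" by (simp add: wt_def)
  have Ec: "E (cconst c) = ev c" for c
    unfolding E_def cconst_def by (simp add: Ev_single[OF ev.comm_ring_hom_axioms] wt0)
  have Ev: "E (cvar i) = x ^ i" for i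
    unfolding E_def cvar_def by (simp add: Ev_single[OF ev.comm_ring_hom_axioms] wt_single[unfolded One_nat_def])
  have mF0: "map_poly E (lift_c (F 0)) = f 0"
    unfolding lift_c_def f_def by (simp add: map_poly_map_poly cc0 o_def Ec)
  define gx where "gx = (\<Sum>i\<in>{1..m}. smult (x ^ i) (f i))"
  have mG: "map_poly E G = gx"
    by (rule poly_eqI) (simp add: gx_def G_def generic_comb_def coeff_map_poly coeff_sum
        E.hom_sum E.hom_mult Ec Ev f_def cc0)
  have dl: "degree (lift_c (F 0)) = degree (F 0)"
  proof -
    have cc_inj: "c = 0" if "cconst c = 0" for c :: poly2
    proof -
      from that have "Poly_Mapping.lookup (cconst c) 0 = 0" by simp
      thus "c = 0" by (simp add: cconst_def)
    qed
    show ?thesis unfolding lift_c_def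
    proof (rule Polynomial.degree_map_poly)
      fix c :: poly2 assume "c \<noteq> 0" thus "cconst c \<noteq> 0" using cc_inj by metis
    qed
  qed
  have d1: "degree (map_poly E (lift_c (F 0))) = degree (lift_c (F 0))"
  proof -
    have "degree (f 0) \<le> degree (F 0)" unfolding f_def
      by (rule degree_le) (simp add: coeff_map_poly coeff_eq_0)
    moreover have "degree (F 0) \<le> degree (f 0)" by (rule le_degree[OF f0lc])
    ultimately show ?thesis unfolding mF0 dl by simp
  qed
  have ElcG: "E (lead_coeff G) = poly Q x"
    unfolding lcG Q_def poly_monom_sum a_def by (simp add: E.hom_sum E.hom_mult Ec Ev mult.commute)
  have Qx: "poly Q x \<noteq> 0" using x unfolding X_def by auto
  have d2: "degree (map_poly E G) = degree G"
  proof -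
    have "degree (map_poly E G) \<le> degree G"
      by (rule degree_le) (simp add: coeff_map_poly coeff_eq_0)
    moreover have "degree G \<le> degree (map_poly E G)"
      by (rule le_degree) (simp add: coeff_map_poly ElcG Qx)
    ultimately show ?thesis by simp
  qed
  have "resultant (f 0) gx = E R"
    unfolding R_def mF0[symmetric] mG[symmetric] by (rule E.resultant_map_poly[OF d1 d2])
  also have "E R = 0"
  proof -
    have "ev (Poly_Mapping.lookup R \<mu>) = 0" for \<mu>
    proof -
      have "content_c R dvd Poly_Mapping.lookup R \<mu>" unfolding content_c_def by (rule Gcd_dvd) simp
      hence "ev (content_c R) dvd ev (Poly_Mapping.lookup R \<mu>)" by (rule ev.hom_dvd)
      moreover have "ev (content_c R) = 0" using con_zero unfolding ev_def R_def G_def .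
      ultimately show ?thesis by simp
    qed
    thus ?thesis unfolding E_def Ev_def by simp
  qed
  finally have "resultant (f 0) gx = 0" .
  hence "degree (gcd (f 0) gx) \<noteq> 0" by (simp add: div_exp_Lazard_gcd.resultant_0_gcd)
  then obtain \<beta> where beta: "poly (gcd (f 0) gx) \<beta> = 0"
  proof -
    have "\<not> constant (poly (gcd (f 0) gx))" using constant_degree[of "gcd (f 0) gx"] \<open>degree (gcd (f 0) gx) \<noteq> 0\<close> by simp
    from fundamental_theorem_of_algebra[OF this] obtain z where "poly (gcd (f 0) gx) z = 0" by blast
    thus ?thesis using that by blast
  qed
  have r0: "poly (f 0) \<beta> = 0" using beta by (metis gcd_dvd1 dvd_mult_div_cancel poly_mult mult_zero_left)
  have rg: "poly gx \<beta> = 0" using beta by (metis gcd_dvd2 dvd_mult_div_cancel poly_mult mult_zero_left)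
  have ri: "\<forall>i\<in>{1..m}. poly (f i) \<beta> = 0"
  proof (rule ccontr)
    assume "\<not> ?thesis"
    hence bB: "\<beta> \<in> B" using r0 unfolding B_def by auto
    have "poly (P \<beta>) x = poly gx \<beta>"
      unfolding P_def gx_def poly_monom_sum by (simp add: poly_sum mult.commute)
    hence "poly (P \<beta>) x = 0" using rg by simp
    with x bB show False unfolding X_def by auto
  qed
  have "\<forall>i\<in>{0..m}. eval3 (F i) \<beta> t1 t2 = 0"
  proof
    fix i assume "i \<in> {0..m}"
    hence "poly (f i) \<beta> = 0" using ri r0 by (cases "i = 0") auto
    thus "eval3 (F i) \<beta> t1 t2 = 0" unfolding f_def ev_def eval3_def .
  qed
  thus ?thesis by blast
qed

end
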